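(* Let $(\rho,u,f_H)$ be an optimal triple on $[0,T]$ for the pressure-less Euler control problem, and assume that for every $a\in[0,T)$ there exists an admissible triple $(\tilde\rho,\tilde u,\tilde f_H)$ on $[a,T]$ with $\tilde\rho(a)=\rho(a)$, $\tilde u(a)=u(a)$ and $\tilde f_H=-\lambda^{-1/2}(\tilde u-\bar v)$. Then for all $0\le t_1\le t_2\le T$, $$\int_{\mathbb R^D}\rho(t_2,x)|u(t_2,x)-\bar v|^2dx\le C_\lambda\int_{\mathbb R^D}\rho(t_1,x)|u(t_1,x)-\bar v|^2dx,$$ where $C_\lambda=1+\lambda^{-1/2}$ if $\lambda\le1$ and $C_\lambda=1+\lambda^{1/2}$ if $\lambda>1$.
   Context: Fix $D\ge1$, $T>0$, $\lambda>0$, $\bar v\in\mathbb R^D$, and an interaction kernel $\Psi:\mathbb R^D\times\mathbb R^D\to\mathbb R$ which is Lipschitz continuous, symmetric ($\Psi(x,y)=\Psi(y,x)$), nonnegative and bounded. For $0\le a<T$, an admissible triple on $[a,T]$ for the controlled pressure-less Euler system is $(\rho,u,f_H)$ with $\rho\in C^1([a,T]\times\mathbb R^D;[0,\infty))$, $u\in C^1([a,T]\times\mathbb R^D;\mathbb R^D)$, $f_H\in C([a,T]\times\mathbb R^D;\mathbb R^D)$, such that there is a compact set $K\subset\mathbb R^D$ with $\operatorname{supp}\rho(t,\cdot)\subset K$ for all $t$, and which satisfies classically $\partial_t\rho+\nabla_x\cdot(\rho u)=0$, $\partial_t(\rho u)+\nabla_x\cdot(\rho u\otimes u)=Q_1+\rho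 f_H$, where $Q_1(t,x)=\int_{\mathbb R^D}\Psi(x,y)\rho(t,x)\rho(t,y)\big(u(t,y)-u(t,x)\big)dy$. Its cost on $[a,T]$ is $J^{[a,T]}_{H_1}=\int_a^T\int_{\mathbb R^D}\rho|u-\bar v|^2+\lambda\rho|f_H|^2\,dx\,dt$. An admissible triple on $[0,T]$ is optimal if for every $a\in[0,T)$ its restriction to $[a,T]$ minimizes $J^{[a,T]}_{H_1}$ among all admissible triples on $[a,T]$ with the same values of $(\rho,u)$ at time $a$. *)

theory Defs
  imports "HOL-Analysis.Analysis"
begin

text \<open>Functions of (t,x) on [a,T] x R^D are curried: g t x.  R^D is an arbitrary
  Euclidean space 'a (dimension DIM('a) >= 1).\<close>

definition C1_on :: "(real \<times> 'a::euclidean_space) set \<Rightarrow> (real \<times> 'a \<Rightarrow> 'b::real_normed_vector) \<Rightarrow> bool" where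
  "C1_on S g \<longleftrightarrow> (\<exists>g'. (\<forall>z\<in>S. (g has_derivative blinfun_apply (g' z)) (at z within S))
                         \<and> continuous_on S g')"

definition dt :: "real \<Rightarrow> real \<Rightarrow> (real \<Rightarrow> 'b::real_normed_vector) \<Rightarrow> real \<Rightarrow> 'b" where
  "dt a T g t = vector_derivative g (at t within {a..T})"

definition divx :: "('a::euclidean_space \<Rightarrow> 'a) \<Rightarrow> 'a \<Rightarrow> real" where
  "divx w x = (\<Sum>b\<in>Basis. frechet_derivative w (at x) b \<bullet> b)"

text \<open>divergence of the matrix field rho u (x) u: i-th component sum_j d_j (rho u_i u_j)\<close>
definition div_tensor :: "('a::euclidean_space \<Rightarrow> real) \<Rightarrow> ('a \<Rightarrow> 'a) \<Rightarrow> 'a \<Rightarrow> 'a" where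
  "div_tensor r w x = (\<Sum>b\<in>Basis. frechet_derivative (\<lambda>y. (r y * (w y \<bullet> b)) *\<^sub>R w y) (at x) b)"

definition Q1 :: "('a::euclidean_space \<Rightarrow> 'a \<Rightarrow> real) \<Rightarrow> (real \<Rightarrow> 'a \<Rightarrow> real) \<Rightarrow> (real \<Rightarrow> 'a \<Rightarrow> 'a) \<Rightarrow> real \<Rightarrow> 'a \<Rightarrow> 'a" where
  "Q1 \<Psi> \<rho> u t x = (LINT y|lborel. (\<Psi> x y * \<rho> t x * \<rho> t y) *\<^sub>R (u t y - u t x))"

definition admissible ::
  "('a::euclidean_space \<Rightarrow> 'a \<Rightarrow> real) \<Rightarrow> real \<Rightarrow> real \<Rightarrow> (real \<Rightarrow> 'a \<Rightarrow> real) \<Rightarrow> (real \<Rightarrow> 'a \<Rightarrow> 'a) \<Rightarrow> (real \<Rightarrow> 'a \<Rightarrow> 'a) \<Rightarrow> bool" where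
  "admissible \<Psi> T a \<rho> u f \<longleftrightarrow>
     0 \<le> a \<and> a < T \<and>
     C1_on ({a..T} \<times> UNIV) (\<lambda>(t,x). \<rho> t x) \<and>
     (\<forall>t\<in>{a..T}. \<forall>x. 0 \<le> \<rho> t x) \<and>
     C1_on ({a..T} \<times> UNIV) (\<lambda>(t,x). u t x) \<and>
     continuous_on ({a..T} \<times> UNIV) (\<lambda>(t,x). f t x) \<and>
     (\<exists>K. compact K \<and> (\<forall>t\<in>{a..T}. closure {x. \<rho> t x \<noteq> 0} \<subseteq> K)) \<and>
     (\<forall>t\<in>{a..T}. \<forall>x.
        dt a T (\<lambda>s. \<rho> s x) t + divx (\<lambda>y. \<rho> t y *\<^sub>R u t y) x = 0 \<and>
        dt a T (\<lambda>s. \<rho> s x *\<^sub>R u s x) t + div_tensor (\<rho> t) (u t) x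
          = Q1 \<Psi> \<rho> u t x + \<rho> t x *\<^sub>R f t x)"

definition cost :: "real \<Rightarrow> 'a::euclidean_space \<Rightarrow> real \<Rightarrow> real \<Rightarrow> (real \<Rightarrow> 'a \<Rightarrow> real) \<Rightarrow> (real \<Rightarrow> 'a \<Rightarrow> 'a) \<Rightarrow> (real \<Rightarrow> 'a \<Rightarrow> 'a) \<Rightarrow> real" where
  "cost lam vbar T a \<rho> u f =
     (LINT t:{a..T}|lborel. (LINT x|lborel. \<rho> t x * (norm (u t x - vbar))\<^sup>2 + lam * \<rho> t x * (norm (f t x))\<^sup>2))"

definition optimal ::
  "('a::euclidean_space \<Rightarrow> 'a \<Rightarrow> real) \<Rightarrow> real \<Rightarrow> 'a \<Rightarrow> real \<Rightarrow> (real \<Rightarrow> 'a \<Rightarrow> real) \<Rightarrow> (real \<Rightarrow> 'a \<Rightarrow> 'a) \<Rightarrow> (real \<Rightarrow> 'a \<Rightarrow> 'a) \<Rightarrow> bool" where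
  "optimal \<Psi> lam vbar T \<rho> u f \<longleftrightarrow>
     admissible \<Psi> T 0 \<rho> u f \<and>
     (\<forall>a\<in>{0..<T}. \<forall>\<rho>' u' f'. admissible \<Psi> T a \<rho>' u' f' \<and> \<rho>' a = \<rho> a \<and> u' a = u a \<longrightarrow>
        cost lam vbar T a \<rho> u f \<le> cost lam vbar T a \<rho>' u' f')"

definition C_lambda :: "real \<Rightarrow> real" where
  "C_lambda lam = (if lam \<le> 1 then 1 + 1 / sqrt lam else 1 + sqrt lam)"

end

theory Submission
  imports Defs "HOL-Analysis.Analysis"
begin

lemma deriv_nonpos_mono:
  fixes \<phi> \<phi>' :: "real \<Rightarrow> real"
  assumes "p \<le> q" "\<And>t. t\<in>{p..q} \<Longrightarrow> (\<phi> has_real_derivative \<phi>' t) (at t within {p..q})"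
    "\<And>t. t\<in>{p..q} \<Longrightarrow> \<phi>' t \<le> 0"
  shows "\<phi> q \<le> \<phi> p"
proof (cases "p = q")
  case True then show ?thesis by simp
next
  case False
  then have pq: "p < q" using assms(1) by simp
  have "continuous_on {p..q} \<phi>"
    using assms(2) by (meson DERIV_continuous continuous_on_eq_continuous_within)
  moreover have "\<phi> differentiable (at x)" if "p < x" "x < q" for x
    using assms(2)[of x] that at_within_Icc_at[of p x q] by (auto simp: real_differentiable_def)
  ultimately obtain l z where z: "p < z" "z < q" "DERIV \<phi> z :> l" "\<phi> q - \<phi> p = (q - p) * l"
    using MVT[OF pq] by blast
  have "DERIV \<phi> z :> \<phi>' z" using assms(2)[of z] z at_within_Icc_at[of p z q] by auto
  then have "l = \<phi>' z" using z(3) DERIV_unique by blast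
  then have "l \<le> 0" using assms(3)[of z] z by auto
  then have "(q - p) * l \<le> 0" using pq by (simp add: mult_nonneg_nonpos)
  then show ?thesis using z(4) by linarith
qed


lemma C1_partials:
  fixes g :: "real \<Rightarrow> 'a::euclidean_space \<Rightarrow> 'b::real_normed_vector"
  assumes "C1_on ({a..T} \<times> UNIV) (\<lambda>(t,x). g t x)"
  obtains G :: "real \<times> 'a \<Rightarrow> (real \<times> 'a) \<Rightarrow>\<^sub>L 'b" where "continuous_on ({a..T} \<times> UNIV) G"
    "\<And>t x. t \<in> {a..T} \<Longrightarrow> ((\<lambda>s. g s x) has_vector_derivative blinfun_apply (G (t,x)) (1,0)) (at t within {a..T})"
    "\<And>t x. t \<in> {a..T} \<Longrightarrow> ((\<lambda>y. g t y) has_derivative (\<lambda>h. blinfun_apply (G (t,x)) (0,h))) (at x)"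
proof -
  obtain G where G: "\<And>z. z \<in> {a..T} \<times> UNIV \<Longrightarrow> ((\<lambda>(t,x). g t x) has_derivative blinfun_apply (G z)) (at z within {a..T} \<times> UNIV)"
    and Gc: "continuous_on ({a..T} \<times> UNIV) G"
    using assms unfolding C1_on_def by blast
  have 1: "((\<lambda>s. g s x) has_vector_derivative blinfun_apply (G (t,x)) (1,0)) (at t within {a..T})"
    if t: "t \<in> {a..T}" for t x
  proof -
    have d: "((\<lambda>s. (s, x)) has_derivative (\<lambda>h. (h, 0))) (at t within {a..T})"
      by (auto intro!: derivative_eq_intros)
    have "((\<lambda>s. (\<lambda>(t,x). g t x) ((\<lambda>s. (s, x)) s)) has_derivative (\<lambda>h. blinfun_apply (G (t,x)) (h, 0))) (at t within {a..T})"
      using has_derivative_in_compose2[OF G _ t d] by auto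
    then show ?thesis unfolding has_vector_derivative_def
      by (simp add: blinfun.scaleR_right[symmetric])
  qed
  have 2: "((\<lambda>y. g t y) has_derivative (\<lambda>h. blinfun_apply (G (t,x)) (0,h))) (at x)"
    if t: "t \<in> {a..T}" for t x
  proof -
    have d: "((\<lambda>y. (t, y)) has_derivative (\<lambda>h. (0, h))) (at x within UNIV)"
      by (auto intro!: derivative_eq_intros)
    have "((\<lambda>y. (\<lambda>(t,x). g t x) ((\<lambda>y. (t, y)) y)) has_derivative (\<lambda>h. blinfun_apply (G (t,x)) (0, h))) (at x within UNIV)"
      by (rule has_derivative_in_compose2[OF G _ _ d]) (use t in auto)
    then show ?thesis by simp
  qed
  show ?thesis using that[of G] Gc 1 2 by blast
qed


lemma integral_supp_eq:
  fixes g :: "'a::euclidean_space \<Rightarrow> 'b::banach"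
  assumes "\<And>x. x \<notin> S \<Longrightarrow> g x = 0"
  shows "integral S g = integral UNIV g"
proof -
  have "(\<lambda>x. if x \<in> S then g x else 0) = g" using assms by auto
  then show ?thesis using integral_restrict_UNIV[of S g] by simp
qed

definition Bx :: "real \<Rightarrow> 'a::euclidean_space set" where
  "Bx R = cbox (-(R+1) *\<^sub>R One) ((R+1) *\<^sub>R One)"

lemma cball_sub_Bx:
  assumes "norm (x::'a::euclidean_space) \<le> R + 1"
  shows "x \<in> Bx R"
  unfolding Bx_def mem_box
proof (intro ballI conjI)
  fix i :: 'a assume i: "i \<in> Basis"
  have "\<bar>x \<bullet> i\<bar> \<le> norm x" using Basis_le_norm[OF i] by simp
  then show "(-(R+1) *\<^sub>R One) \<bullet> i \<le> x \<bullet> i" "x \<bullet> i \<le> ((R+1) *\<^sub>R One) \<bullet> i"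
    using i assms by auto
qed

lemma int_deriv_zero:
  fixes g :: "'a::euclidean_space \<Rightarrow> real" and G :: "'a \<Rightarrow> 'a \<Rightarrow> real"
  assumes gd: "\<And>x. (g has_derivative G x) (at x)"
    and Gc: "continuous_on UNIV (\<lambda>x. G x b)" and b: "norm b \<le> 1"
    and supp: "\<And>x. R < norm x \<Longrightarrow> g x = 0" and R: "0 \<le> R"
  shows "integral (Bx R) (\<lambda>x. G x b) = 0"
proof -
  define h where "h s x = g (x + s *\<^sub>R b)" for s :: real and x
  obtain lo hi :: 'a where B: "Bx R = cbox lo hi" unfolding Bx_def by blast
  have gc: "continuous_on UNIV g"
    using gd by (meson continuous_on_eq_continuous_within has_derivative_continuous)
  have hd: "((\<lambda>s. h s x) has_field_derivative G (x + s *\<^sub>R b) b) (at s within ball 0 1)" for s x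
  proof -
    have 1: "((\<lambda>s. x + s *\<^sub>R b) has_derivative (\<lambda>h. h *\<^sub>R b)) (at s within ball 0 1)"
      by (auto intro!: derivative_eq_intros)
    have 2: "((\<lambda>s. g (x + s *\<^sub>R b)) has_derivative (\<lambda>h. G (x + s *\<^sub>R b) (h *\<^sub>R b))) (at s within ball 0 1)"
      using has_derivative_compose[OF 1 gd] by simp
    have lin: "linear (G (x + s *\<^sub>R b))" using gd has_derivative_linear by blast
    have eq: "(\<lambda>h. G (x + s *\<^sub>R b) (h *\<^sub>R b)) = (*) (G (x + s *\<^sub>R b) b)"
      by (rule ext) (simp add: linear_scale[OF lin] mult.commute)
    show ?thesis using 2 unfolding h_def has_field_derivative_def eq .
  qed
  have cont: "continuous_on (ball 0 1 \<times> cbox lo hi) (\<lambda>(s, x). G (x + s *\<^sub>R b) b)"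
  proof -
    have "continuous_on (ball 0 1 \<times> cbox lo hi) ((\<lambda>x. G x b) \<circ> (\<lambda>(s, x). x + s *\<^sub>R b))"
      by (intro continuous_on_compose continuous_on_subset[OF Gc]) (auto simp: case_prod_beta intro!: continuous_intros)
    then show ?thesis by (simp add: o_def case_prod_beta)
  qed
  have int: "h s integrable_on cbox lo hi" for s
    unfolding h_def by (intro integrable_continuous continuous_on_compose2[OF gc]) (auto intro!: continuous_intros)
  have D: "((\<lambda>s. integral (cbox lo hi) (h s)) has_field_derivative integral (cbox lo hi) (\<lambda>x. G (x + 0 *\<^sub>R b) b)) (at 0 within ball 0 1)"
    by (rule leibniz_rule_field_derivative[OF hd int cont]) auto
  have D': "((\<lambda>s. integral (cbox lo hi) (h s)) has_field_derivative integral (cbox lo hi) (\<lambda>x. G x b)) (at 0)"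
    using D at_within_open[of 0 "ball (0::real) 1"] by simp
  have const: "integral (cbox lo hi) (h s) = integral UNIV g" if s: "s \<in> ball 0 1" for s
  proof -
    have ns: "norm (s *\<^sub>R b) \<le> 1" using s b by (simp add: mult_le_one)
    have "integral (cbox lo hi) (h s) = integral (cbox (lo + s *\<^sub>R b) (hi + s *\<^sub>R b)) g"
      using integral_shift_cbox[where f=g and a="lo + s *\<^sub>R b" and b="hi + s *\<^sub>R b" and c="s *\<^sub>R b"] unfolding h_def by simp
    also have "\<dots> = integral UNIV g"
    proof (rule integral_supp_eq)
      fix x assume x: "x \<notin> cbox (lo + s *\<^sub>R b) (hi + s *\<^sub>R b)"
      show "g x = 0"
      proof (rule supp, rule ccontr)
        assume "\<not> R < norm x"
        then have "norm (x - s *\<^sub>R b) \<le> R + 1" using norm_triangle_ineq4[of x "s *\<^sub>R b"] ns by auto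
        then have "x - s *\<^sub>R b \<in> cbox lo hi" using cball_sub_Bx B by metis
        then have "x \<in> cbox (lo + s *\<^sub>R b) (hi + s *\<^sub>R b)"
          unfolding mem_box by (auto simp: inner_diff_left inner_add_left)
        then show False using x by simp
      qed
    qed
    finally show ?thesis .
  qed
  have "((\<lambda>s. integral (cbox lo hi) (h s)) has_field_derivative 0) (at 0)"
    by (rule has_field_derivative_transform_within_open[of "\<lambda>_. integral UNIV g" 0 0 "ball 0 1"])
      (auto intro: const[symmetric])
  then show ?thesis using D' B DERIV_unique by metis
qed


lemma alg_identity:
  fixes r Rt :: real and u vb Ut Q F :: "'a::euclidean_space" and Rx :: "'a \<Rightarrow> real" and Ux :: "'a \<Rightarrow> 'a"
  assumes p1: "Rt + (\<Sum>b\<in>Basis. (r *\<^sub>R Ux b + Rx b *\<^sub>R u) \<bullet> b) = 0"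
    and p2: "r *\<^sub>R Ut + Rt *\<^sub>R u + (\<Sum>b\<in>Basis. (r * (u \<bullet> b)) *\<^sub>R Ux b + (Rx b * (u \<bullet> b) + r * (Ux b \<bullet> b)) *\<^sub>R u) = Q + r *\<^sub>R F"
  shows "Rt * ((u - vb) \<bullet> (u - vb)) + 2 * r * ((u - vb) \<bullet> Ut)
    = - (\<Sum>b\<in>Basis. (Rx b * (u \<bullet> b) + r * (Ux b \<bullet> b)) * ((u - vb) \<bullet> (u - vb)) + r * (u \<bullet> b) * (2 * ((u - vb) \<bullet> Ux b)))
      + 2 * ((u - vb) \<bullet> Q) + 2 * r * ((u - vb) \<bullet> F)"
proof -
  define w where "w = u - vb"
  define S1 where "S1 = (\<Sum>b\<in>Basis. Rx b * (u \<bullet> b) + r * (Ux b \<bullet> b))"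
  define S2 where "S2 = (\<Sum>b\<in>Basis. r * (u \<bullet> b) * (w \<bullet> Ux b))"
  have e1: "Rt = - S1" using p1 unfolding S1_def by (simp add: inner_add_left algebra_simps sum.distrib)
  have "w \<bullet> (r *\<^sub>R Ut + Rt *\<^sub>R u + (\<Sum>b\<in>Basis. (r * (u \<bullet> b)) *\<^sub>R Ux b + (Rx b * (u \<bullet> b) + r * (Ux b \<bullet> b)) *\<^sub>R u))
     = r * (w \<bullet> Ut) + Rt * (w \<bullet> u) + S2 + S1 * (w \<bullet> u)"
    unfolding S1_def S2_def
    apply (simp add: inner_add_right inner_sum_right sum.distrib sum_distrib_right algebra_simps)
    by (simp add: sum_distrib_left mult_ac)
  then have e2: "r * (w \<bullet> Ut) + Rt * (w \<bullet> u) + S2 + S1 * (w \<bullet> u) = w \<bullet> Q + r * (w \<bullet> F)"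
    using p2 by (simp add: inner_add_right)
  have e3: "(\<Sum>b\<in>Basis. (Rx b * (u \<bullet> b) + r * (Ux b \<bullet> b)) * (w \<bullet> w) + r * (u \<bullet> b) * (2 * (w \<bullet> Ux b)))
     = S1 * (w \<bullet> w) + 2 * S2"
    unfolding S1_def S2_def by (simp add: sum.distrib sum_distrib_right sum_distrib_left algebra_simps)
  show ?thesis unfolding w_def[symmetric] e3 using e1 e2 by (simp add: algebra_simps)
qed


locale trip =
  fixes \<Psi> :: "'a::euclidean_space \<Rightarrow> 'a \<Rightarrow> real" and T a :: real
    and \<rho> :: "real \<Rightarrow> 'a \<Rightarrow> real" and u f :: "real \<Rightarrow> 'a \<Rightarrow> 'a" and vb :: 'a
    and Gr :: "real \<times> 'a \<Rightarrow> (real \<times> 'a) \<Rightarrow>\<^sub>L real" and Gu :: "real \<times> 'a \<Rightarrow> (real \<times> 'a) \<Rightarrow>\<^sub>L 'a"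
    and R :: real
  assumes aT: "a < T"
    and rho_nn: "\<And>t x. t \<in> {a..T} \<Longrightarrow> 0 \<le> \<rho> t x"
    and f_cont: "continuous_on ({a..T} \<times> UNIV) (\<lambda>(t,x). f t x)"
    and rho_cont: "continuous_on ({a..T} \<times> UNIV) (\<lambda>(t,x). \<rho> t x)"
    and u_cont: "continuous_on ({a..T} \<times> UNIV) (\<lambda>(t,x). u t x)"
    and pde1: "\<And>t x. t \<in> {a..T} \<Longrightarrow> dt a T (\<lambda>s. \<rho> s x) t + divx (\<lambda>y. \<rho> t y *\<^sub>R u t y) x = 0"
    and pde2: "\<And>t x. t \<in> {a..T} \<Longrightarrow> dt a T (\<lambda>s. \<rho> s x *\<^sub>R u s x) t + div_tensor (\<rho> t) (u t) x
          = Q1 \<Psi> \<rho> u t x + \<rho> t x *\<^sub>R f t x"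
    and Psi_cont: "continuous_on UNIV (\<lambda>(x,y). \<Psi> x y)"
    and Psi_sym: "\<And>x y. \<Psi> x y = \<Psi> y x"
    and Psi_nn: "\<And>x y. 0 \<le> \<Psi> x y"
    and Gr_cont: "continuous_on ({a..T} \<times> UNIV) Gr"
    and Gu_cont: "continuous_on ({a..T} \<times> UNIV) Gu"
    and Gr_t: "\<And>t x. t \<in> {a..T} \<Longrightarrow> ((\<lambda>s. \<rho> s x) has_vector_derivative blinfun_apply (Gr (t,x)) (1,0)) (at t within {a..T})"
    and Gr_x: "\<And>t x. t \<in> {a..T} \<Longrightarrow> ((\<lambda>y. \<rho> t y) has_derivative (\<lambda>h. blinfun_apply (Gr (t,x)) (0,h))) (at x)"
    and Gu_t: "\<And>t x. t \<in> {a..T} \<Longrightarrow> ((\<lambda>s. u s x) has_vector_derivative blinfun_apply (Gu (t,x)) (1,0)) (at t within {a..T})"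
    and Gu_x: "\<And>t x. t \<in> {a..T} \<Longrightarrow> ((\<lambda>y. u t y) has_derivative (\<lambda>h. blinfun_apply (Gu (t,x)) (0,h))) (at x)"
    and R: "0 \<le> R"
    and supp: "\<And>t x. t \<in> {a..T} \<Longrightarrow> R < norm x \<Longrightarrow> \<rho> t x = 0"
begin

abbreviation "rt t x \<equiv> blinfun_apply (Gr (t,x)) (1,0)"
abbreviation "rx t x h \<equiv> blinfun_apply (Gr (t,x)) (0,h)"
abbreviation "ut t x \<equiv> blinfun_apply (Gu (t,x)) (1,0)"
abbreviation "ux t x h \<equiv> blinfun_apply (Gu (t,x)) (0,h)"
abbreviation "w t x \<equiv> u t x - vb"

definition Gb :: "real \<Rightarrow> 'a \<Rightarrow> 'a \<Rightarrow> real" where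
  "Gb t x b = (rx t x b * (u t x \<bullet> b) + \<rho> t x * (ux t x b \<bullet> b)) * (w t x \<bullet> w t x)
     + \<rho> t x * (u t x \<bullet> b) * (2 * (w t x \<bullet> ux t x b))"

lemma rho_t: "t \<in> {a..T} \<Longrightarrow> ((\<lambda>s. \<rho> s x) has_field_derivative rt t x) (at t within {a..T})"
  using Gr_t by (simp add: has_real_derivative_iff_has_vector_derivative)

lemma dt_rho: "t \<in> {a..T} \<Longrightarrow> dt a T (\<lambda>s. \<rho> s x) t = rt t x"
  unfolding dt_def by (rule vector_derivative_within_closed_interval[OF aT _ Gr_t])

lemma dt_m: "t \<in> {a..T} \<Longrightarrow> dt a T (\<lambda>s. \<rho> s x *\<^sub>R u s x) t = \<rho> t x *\<^sub>R ut t x + rt t x *\<^sub>R u t x"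
  unfolding dt_def
  by (rule vector_derivative_within_closed_interval[OF aT _ has_vector_derivative_scaleR[OF rho_t Gu_t]])

lemma divx_eq: "t \<in> {a..T} \<Longrightarrow> divx (\<lambda>y. \<rho> t y *\<^sub>R u t y) x = (\<Sum>b\<in>Basis. (\<rho> t x *\<^sub>R ux t x b + rx t x b *\<^sub>R u t x) \<bullet> b)"
proof -
  assume t: "t \<in> {a..T}"
  have "((\<lambda>y. \<rho> t y *\<^sub>R u t y) has_derivative (\<lambda>h. \<rho> t x *\<^sub>R ux t x h + rx t x h *\<^sub>R u t x)) (at x)"
    by (rule has_derivative_scaleR[OF Gr_x[OF t] Gu_x[OF t]])
  then show ?thesis unfolding divx_def by (simp add: frechet_derivative_at[symmetric])
qed

lemma div_tensor_eq: "t \<in> {a..T} \<Longrightarrow> div_tensor (\<rho> t) (u t) x =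
   (\<Sum>b\<in>Basis. (\<rho> t x * (u t x \<bullet> b)) *\<^sub>R ux t x b + (rx t x b * (u t x \<bullet> b) + \<rho> t x * (ux t x b \<bullet> b)) *\<^sub>R u t x)"
proof -
  assume t: "t \<in> {a..T}"
  have D: "((\<lambda>y. (\<rho> t y * (u t y \<bullet> b)) *\<^sub>R u t y) has_derivative
     (\<lambda>h. (\<rho> t x * (u t x \<bullet> b)) *\<^sub>R ux t x h + (\<rho> t x * (ux t x h \<bullet> b) + rx t x h * (u t x \<bullet> b)) *\<^sub>R u t x)) (at x)" for b
    by (intro has_derivative_scaleR has_derivative_mult Gr_x[OF t] Gu_x[OF t] has_derivative_inner_left)
  have fd: "frechet_derivative (\<lambda>y. (\<rho> t y * (u t y \<bullet> b)) *\<^sub>R u t y) (at x) =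
     (\<lambda>h. (\<rho> t x * (u t x \<bullet> b)) *\<^sub>R ux t x h + (\<rho> t x * (ux t x h \<bullet> b) + rx t x h * (u t x \<bullet> b)) *\<^sub>R u t x)" for b
    using frechet_derivative_at[OF D, symmetric] .
  show ?thesis unfolding div_tensor_def
    by (intro sum.cong refl) (simp only: fd, simp add: algebra_simps)
qed

lemma pointwise:
  assumes t: "t \<in> {a..T}"
  shows "rt t x * (w t x \<bullet> w t x) + 2 * \<rho> t x * (w t x \<bullet> ut t x)
    = - (\<Sum>b\<in>Basis. Gb t x b) + 2 * (w t x \<bullet> Q1 \<Psi> \<rho> u t x) + 2 * \<rho> t x * (w t x \<bullet> f t x)"
  unfolding Gb_def
proof (rule alg_identity)
  show "rt t x + (\<Sum>b\<in>Basis. (\<rho> t x *\<^sub>R ux t x b + rx t x b *\<^sub>R u t x) \<bullet> b) = 0"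
    using pde1[OF t, of x] by (simp add: dt_rho[OF t] divx_eq[OF t])
  show "\<rho> t x *\<^sub>R ut t x + rt t x *\<^sub>R u t x + (\<Sum>b\<in>Basis. (\<rho> t x * (u t x \<bullet> b)) *\<^sub>R ux t x b + (rx t x b * (u t x \<bullet> b) + \<rho> t x * (ux t x b \<bullet> b)) *\<^sub>R u t x) =
    Q1 \<Psi> \<rho> u t x + \<rho> t x *\<^sub>R f t x"
    using pde2[OF t, of x] by (simp add: dt_m[OF t] div_tensor_eq[OF t])
qed

end

lemma integrable_cont_supp:
  fixes g :: "'b::euclidean_space \<Rightarrow> 'c::{banach,second_countable_topology}"
  assumes "continuous_on UNIV g" "compact S" "\<And>x. x \<notin> S \<Longrightarrow> g x = 0"
  shows "integrable lborel g"
proof -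
  have "integrable lborel (\<lambda>x. indicator S x *\<^sub>R g x)"
    by (rule borel_integrable_compact[OF assms(2) continuous_on_subset[OF assms(1)]]) auto
  moreover have "(\<lambda>x. indicator S x *\<^sub>R g x) = g" using assms(3) by (auto simp: indicator_def)
  ultimately show ?thesis by simp
qed

lemma lint_eq_integral:
  fixes g :: "'a::euclidean_space \<Rightarrow> real"
  assumes "integrable lborel g" "\<And>x. R < norm x \<Longrightarrow> g x = 0"
  shows "integral\<^sup>L lborel g = integral (Bx R) g"
proof -
  have "integral (Bx R) g = integral UNIV g"
  proof (rule integral_supp_eq)
    fix x :: 'a assume "x \<notin> Bx R"
    then have "R + 1 < norm x" using cball_sub_Bx[of x R] by force
    then show "g x = 0" using assms(2) by simp
  qed
  also have "\<dots> = integral\<^sup>L lborel g"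
    using has_integral_integral_lborel[OF assms(1)] by (rule integral_unique)
  finally show ?thesis by simp
qed

lemma lint_eq_integral_cont:
  fixes g :: "'a::euclidean_space \<Rightarrow> real"
  assumes "continuous_on UNIV g" "\<And>x. R < norm x \<Longrightarrow> g x = 0"
  shows "integrable lborel g" "integral\<^sup>L lborel g = integral (Bx R) g"
proof -
  show i: "integrable lborel g"
    by (rule integrable_cont_supp[OF assms(1) compact_cball[of 0 R]]) (use assms(2) in auto)
  show "integral\<^sup>L lborel g = integral (Bx R) g" by (rule lint_eq_integral[OF i assms(2)])
qed

lemma cont_slice:
  assumes "continuous_on (A \<times> UNIV) H" "t \<in> A"
  shows "continuous_on UNIV (\<lambda>x. H (t,x))"
  by (rule continuous_on_compose2[OF assms(1)]) (use assms(2) in \<open>auto intro!: continuous_intros\<close>)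

lemma cont_blin:
  fixes G :: "'x::topological_space \<Rightarrow> 'b::real_normed_vector \<Rightarrow>\<^sub>L 'c::real_normed_vector"
  assumes "continuous_on S G" "continuous_on S v"
  shows "continuous_on S (\<lambda>z. blinfun_apply (G z) (v z))"
  using assms by (intro continuous_intros)


context trip begin

lemma rho_c: "t \<in> {a..T} \<Longrightarrow> continuous_on UNIV (\<rho> t)"
  using cont_slice[OF rho_cont] by simp
lemma u_c: "t \<in> {a..T} \<Longrightarrow> continuous_on UNIV (u t)"
  using cont_slice[OF u_cont] by simp
lemma f_c: "t \<in> {a..T} \<Longrightarrow> continuous_on UNIV (f t)"
  using cont_slice[OF f_cont] by simp
lemma rx_c: "t \<in> {a..T} \<Longrightarrow> continuous_on UNIV (\<lambda>x. rx t x h)"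
  by (rule cont_blin[OF cont_slice[OF Gr_cont]]) auto
lemma ux_c: "t \<in> {a..T} \<Longrightarrow> continuous_on UNIV (\<lambda>x. ux t x h)"
  by (rule cont_blin[OF cont_slice[OF Gu_cont]]) auto

lemma Gb_zero:
  assumes t: "t \<in> {a..T}" and b: "b \<in> Basis"
  shows "integral (Bx R) (\<lambda>x. Gb t x b) = 0"
proof -
  define g where "g = (\<lambda>x. \<rho> t x * (u t x \<bullet> b) * (w t x \<bullet> w t x))"
  define G where "G = (\<lambda>x h. (rx t x h * (u t x \<bullet> b) + \<rho> t x * (ux t x h \<bullet> b)) * (w t x \<bullet> w t x)
     + \<rho> t x * (u t x \<bullet> b) * (2 * (w t x \<bullet> ux t x h)))"
  have d: "(g has_derivative G x) (at x)" for x
  proof -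
    have d1: "((\<lambda>x. \<rho> t x * (u t x \<bullet> b)) has_derivative (\<lambda>h. \<rho> t x * (ux t x h \<bullet> b) + rx t x h * (u t x \<bullet> b))) (at x)"
      by (rule has_derivative_mult[OF Gr_x[OF t] has_derivative_inner_left[OF Gu_x[OF t]]])
    have d2: "((\<lambda>x. w t x) has_derivative (\<lambda>h. ux t x h)) (at x)"
      using has_derivative_diff[OF Gu_x[OF t] has_derivative_const] by simp
    have d3: "((\<lambda>x. w t x \<bullet> w t x) has_derivative (\<lambda>h. 2 * (w t x \<bullet> ux t x h))) (at x)"
      by (rule has_derivative_eq_rhs[OF has_derivative_inner[OF d2 d2]]) (rule ext, metis inner_commute mult_2)
    show ?thesis unfolding g_def G_def
      by (rule has_derivative_eq_rhs[OF has_derivative_mult[OF d1 d3]]) (rule ext, simp only: add.commute mult.assoc)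
  qed
  have c: "continuous_on UNIV (\<lambda>x. G x b)"
  proof -
    have c1: "continuous_on UNIV (\<lambda>x. rx t x b)" "continuous_on UNIV (\<lambda>x. ux t x b)"
      "continuous_on UNIV (\<lambda>x. \<rho> t x)" "continuous_on UNIV (\<lambda>x. u t x)"
      using rx_c[OF t] ux_c[OF t] rho_c[OF t] u_c[OF t] by auto
    show ?thesis unfolding G_def
      by (intro continuous_on_add continuous_on_mult continuous_on_inner continuous_on_diff continuous_on_const c1)
  qed
  have nb: "norm b \<le> 1" using b by simp
  have sp: "\<And>x. R < norm x \<Longrightarrow> g x = 0" unfolding g_def using supp[OF t] by simp
  have "integral (Bx R) (\<lambda>x. G x b) = 0"
    by (rule int_deriv_zero[OF d c nb sp R])
  then show ?thesis unfolding Gb_def G_def .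
qed

end

lemma inner_aux: "(p::'a::real_inner) \<bullet> (h *\<^sub>R q) + (h *\<^sub>R q) \<bullet> p = 2 * (p \<bullet> q) * h"
  by (simp add: inner_commute[of q p] algebra_simps)

lemma mult_aux: "(A::real) * B + C * D = A * B + 2 * (D::real) * E \<Longrightarrow> True" by simp

lemma mult_aux2: "(A::real) * B + (2 * C) * D = A * B + 2 * D * C"
  by (simp add: algebra_simps)

context trip begin

lemma w_t: "t \<in> {a..T} \<Longrightarrow> ((\<lambda>s. w s x \<bullet> w s x) has_field_derivative 2 * (w t x \<bullet> ut t x)) (at t within {a..T})"
proof -
  assume t: "t \<in> {a..T}"
  have d: "((\<lambda>s. w s x) has_derivative (\<lambda>h. h *\<^sub>R ut t x)) (at t within {a..T})"
    using has_vector_derivative_diff[OF Gu_t[OF t] has_vector_derivative_const[of vb]]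
    unfolding has_vector_derivative_def by simp
  have "((\<lambda>s. w s x \<bullet> w s x) has_derivative (\<lambda>h. w t x \<bullet> (h *\<^sub>R ut t x) + (h *\<^sub>R ut t x) \<bullet> w t x)) (at t within {a..T})"
    by (rule has_derivative_inner[OF d d])
  moreover have "(\<lambda>h. w t x \<bullet> (h *\<^sub>R ut t x) + (h *\<^sub>R ut t x) \<bullet> w t x) = (*) (2 * (w t x \<bullet> ut t x))"
    by (rule ext) (rule inner_aux)
  ultimately show ?thesis unfolding has_field_derivative_def by simp
qed

lemma fx_cont: "continuous_on ({a..T} \<times> UNIV) (\<lambda>(t,x). rt t x * (w t x \<bullet> w t x) + 2 * \<rho> t x * (w t x \<bullet> ut t x))"
proof -
  have c1: "continuous_on ({a..T} \<times> UNIV) (\<lambda>z. blinfun_apply (Gr z) (1,0))"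
    by (rule cont_blin[OF Gr_cont continuous_on_const])
  have c2: "continuous_on ({a..T} \<times> UNIV) (\<lambda>z. blinfun_apply (Gu z) (1,0))"
    by (rule cont_blin[OF Gu_cont continuous_on_const])
  have "continuous_on ({a..T} \<times> UNIV) (\<lambda>z. blinfun_apply (Gr z) (1,0) * (((\<lambda>(t,x). u t x) z - vb) \<bullet> ((\<lambda>(t,x). u t x) z - vb))
      + 2 * (\<lambda>(t,x). \<rho> t x) z * (((\<lambda>(t,x). u t x) z - vb) \<bullet> blinfun_apply (Gu z) (1,0)))"
    by (intro continuous_on_add continuous_on_mult continuous_on_inner continuous_on_diff continuous_on_const c1 c2 u_cont rho_cont)
  then show ?thesis by (simp add: case_prod_beta)
qed

lemma E_deriv:
  assumes t0: "t0 \<in> {a..T}"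
  shows "((\<lambda>t. integral (Bx R) (\<lambda>x. \<rho> t x * (w t x \<bullet> w t x))) has_field_derivative
     integral (Bx R) (\<lambda>x. rt t0 x * (w t0 x \<bullet> w t0 x) + 2 * \<rho> t0 x * (w t0 x \<bullet> ut t0 x))) (at t0 within {a..T})"
proof -
  obtain lo hi :: 'a where B: "Bx R = cbox lo hi" unfolding Bx_def by blast
  define F where "F = (\<lambda>t x. \<rho> t x * (w t x \<bullet> w t x))"
  define Fx where "Fx = (\<lambda>t x. rt t x * (w t x \<bullet> w t x) + 2 * \<rho> t x * (w t x \<bullet> ut t x))"
  have d: "((\<lambda>t. F t x) has_field_derivative Fx t x) (at t within {a..T})" if "t \<in> {a..T}" for t x
    unfolding F_def Fx_def
    by (rule DERIV_cong[OF DERIV_mult[OF rho_t[OF that] w_t[OF that]]]) (rule mult_aux2)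
  have i: "F t integrable_on cbox lo hi" if t: "t \<in> {a..T}" for t
  proof -
    have c1: "continuous_on UNIV (\<lambda>x. \<rho> t x)" "continuous_on UNIV (\<lambda>x. u t x)"
      using rho_c[OF t] u_c[OF t] by auto
    have "continuous_on UNIV (\<lambda>x. \<rho> t x * (w t x \<bullet> w t x))"
      by (intro continuous_on_mult continuous_on_inner continuous_on_diff continuous_on_const c1)
    then show ?thesis unfolding F_def by (rule integrable_continuous[OF continuous_on_subset[OF _ subset_UNIV]])
  qed
  have c: "continuous_on ({a..T} \<times> cbox lo hi) (\<lambda>(t, x). Fx t x)"
    unfolding Fx_def by (rule continuous_on_subset[OF fx_cont]) auto
  have "((\<lambda>t. integral (cbox lo hi) (F t)) has_field_derivative integral (cbox lo hi) (Fx t0)) (at t0 within {a..T})"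
    by (rule leibniz_rule_field_derivative[OF d i c t0 convex_real_interval(5)])
  then show ?thesis unfolding B F_def Fx_def .
qed

end

lemma sym_aux:
  fixes p q v :: "'a::real_inner" and c :: real
  shows "c * ((p - v) \<bullet> (q - p)) + c * ((q - v) \<bullet> (p - q)) = - c * ((q - p) \<bullet> (q - p))"
proof -
  have "(p - v) \<bullet> (q - p) + (q - v) \<bullet> (p - q) = (p - v) \<bullet> (q - p) - (q - v) \<bullet> (q - p)"
    by (simp add: inner_diff_right)
  also have "\<dots> = (p - q) \<bullet> (q - p)" by (simp add: inner_diff_left)
  also have "\<dots> = - ((q - p) \<bullet> (q - p))" by (metis inner_minus_left minus_diff_eq)
  finally show ?thesis by (metis distrib_left mult_minus_right mult_minus_left)
qed

lemma integral_nonpos: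
  fixes g :: "'b \<Rightarrow> real"
  assumes "\<And>x. g x \<le> 0"
  shows "integral\<^sup>L M g \<le> 0"
  using Bochner_Integration.integral_nonneg[where f="\<lambda>x. - g x" and M=M] assms by simp

context trip begin

lemma Q_neg:
  assumes t: "t \<in> {a..T}"
  shows "integrable lborel (\<lambda>x. w t x \<bullet> Q1 \<Psi> \<rho> u t x) \<and> (LINT x|lborel. w t x \<bullet> Q1 \<Psi> \<rho> u t x) \<le> 0"
proof -
  have cr: "continuous_on UNIV (\<lambda>x. \<rho> t x)" using rho_c[OF t] by simp
  have cu: "continuous_on UNIV (\<lambda>x. u t x)" using u_c[OF t] by simp
  have cP: "continuous_on UNIV (\<lambda>z. \<Psi> (fst z) (snd z))" using Psi_cont by (simp add: case_prod_beta)
  define K where "K = (\<lambda>z::'a\<times>'a. (\<Psi> (fst z) (snd z) * \<rho> t (fst z) * \<rho> t (snd z)) * (w t (fst z) \<bullet> (u t (snd z) - u t (fst z))))"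
  define K2 where "K2 = (\<lambda>z::'a\<times>'a. K (snd z, fst z))"
  have cr1: "continuous_on UNIV (\<lambda>z::'a\<times>'a. \<rho> t (fst z))" "continuous_on UNIV (\<lambda>z::'a\<times>'a. \<rho> t (snd z))"
    by (rule continuous_on_compose2[OF cr], auto intro!: continuous_intros)+
  have cu1: "continuous_on UNIV (\<lambda>z::'a\<times>'a. u t (fst z))" "continuous_on UNIV (\<lambda>z::'a\<times>'a. u t (snd z))"
    by (rule continuous_on_compose2[OF cu], auto intro!: continuous_intros)+
  have cK: "continuous_on UNIV K" unfolding K_def
    by (intro continuous_on_mult continuous_on_inner continuous_on_diff continuous_on_const cr1 cu1 cP)
  have cK2: "continuous_on UNIV K2" unfolding K2_def
    by (rule continuous_on_compose2[OF cK]) (auto intro!: continuous_intros)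
  have sK: "K z = 0" if "z \<notin> cball 0 R \<times> cball 0 R" for z
    using that supp[OF t] unfolding K_def by (cases z) (auto simp: not_le)
  have sK2: "K2 z = 0" if "z \<notin> cball 0 R \<times> cball 0 R" for z
    using that sK unfolding K2_def by (cases z) auto
  have iK: "integrable (lborel \<Otimes>\<^sub>M lborel) K"
    unfolding lborel_prod by (rule integrable_cont_supp[OF cK compact_Times[OF compact_cball compact_cball] sK])
  have iK2: "integrable (lborel \<Otimes>\<^sub>M lborel) K2"
    unfolding lborel_prod by (rule integrable_cont_supp[OF cK2 compact_Times[OF compact_cball compact_cball] sK2])
  have sec1: "integrable lborel (\<lambda>y. K (x, y))" for x
    by (rule integrable_cont_supp[OF continuous_on_compose2[OF cK] compact_cball[of 0 R]])
       (auto intro!: continuous_intros sK)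
  have sec2: "integrable lborel (\<lambda>y. K (y, x))" for x
    by (rule integrable_cont_supp[OF continuous_on_compose2[OF cK] compact_cball[of 0 R]])
       (auto intro!: continuous_intros sK)
  have secQ: "integrable lborel (\<lambda>y. (\<Psi> x y * \<rho> t x * \<rho> t y) *\<^sub>R (u t y - u t x))" for x
  proof (rule integrable_cont_supp[OF _ compact_cball[of 0 R]])
    have "continuous_on UNIV (\<lambda>y. (\<lambda>z. \<Psi> (fst z) (snd z)) (x, y))"
      by (rule continuous_on_compose2[OF cP]) (auto intro!: continuous_intros)
    then have cy: "continuous_on UNIV (\<lambda>y. \<Psi> x y)" by simp
    show "continuous_on UNIV (\<lambda>y. (\<Psi> x y * \<rho> t x * \<rho> t y) *\<^sub>R (u t y - u t x))"
      by (intro continuous_on_scaleR continuous_on_mult continuous_on_diff continuous_on_const cy cr cu)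
    show "(\<Psi> x y * \<rho> t x * \<rho> t y) *\<^sub>R (u t y - u t x) = 0" if "y \<notin> cball 0 R" for y
      using that supp[OF t] by simp
  qed
  have eqQ: "w t x \<bullet> Q1 \<Psi> \<rho> u t x = (LINT y|lborel. K (x, y))" for x
    unfolding Q1_def K_def using integral_inner_right[OF secQ[of x], of "w t x"] by simp
  define J where "J x = (LINT y|lborel. K (x, y))" for x
  define J2 where "J2 x = (LINT y|lborel. K (y, x))" for x
  have iJ: "integrable lborel J" unfolding J_def
    using lborel_pair.integrable_fst'[OF iK] by simp
  have iJ2: "integrable lborel J2" unfolding J2_def
    using lborel_pair.integrable_fst'[OF iK2] unfolding K2_def by simp
  have fub: "(LINT y|lborel. (LINT x|lborel. K (x, y))) = (LINT x|lborel. (LINT y|lborel. K (x, y)))"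
    using lborel_pair.Fubini_integral[of "\<lambda>x y. K (x, y)"] iK by simp
  have eJ: "integral\<^sup>L lborel J2 = integral\<^sup>L lborel J"
    unfolding J_def J2_def using fub by simp
  have pt: "J x + J2 x \<le> 0" for x
  proof -
    have "J x + J2 x = (LINT y|lborel. K (x, y) + K (y, x))"
      unfolding J_def J2_def using sec1 sec2 by simp
    also have "\<dots> \<le> 0"
    proof (rule integral_nonpos)
      fix y
      have "K (x, y) + K (y, x) = - (\<Psi> x y * \<rho> t x * \<rho> t y) * ((u t y - u t x) \<bullet> (u t y - u t x))"
        unfolding K_def using sym_aux[of "\<Psi> x y * \<rho> t x * \<rho> t y" "u t x" vb "u t y"]
        by (simp add: Psi_sym[of y x] mult_ac)
      also have "\<dots> \<le> 0"
        using Psi_nn[of x y] rho_nn[OF t, of x] rho_nn[OF t, of y] by simp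
      finally show "K (x, y) + K (y, x) \<le> 0" .
    qed
    finally show ?thesis .
  qed
  have "integral\<^sup>L lborel J + integral\<^sup>L lborel J2 = (LINT x|lborel. J x + J2 x)"
    using iJ iJ2 by simp
  also have "\<dots> \<le> 0" by (rule integral_nonpos) (rule pt)
  finally have "integral\<^sup>L lborel J \<le> 0" using eJ by simp
  moreover have "(\<lambda>x. w t x \<bullet> Q1 \<Psi> \<rho> u t x) = J" unfolding J_def using eqQ by auto
  ultimately show ?thesis using iJ by simp
qed

end

definition En :: "(real \<Rightarrow> 'a::euclidean_space \<Rightarrow> real) \<Rightarrow> (real \<Rightarrow> 'a \<Rightarrow> 'a) \<Rightarrow> 'a \<Rightarrow> real \<Rightarrow> real" where
  "En \<rho> u vb t = (LINT x|lborel. \<rho> t x * (norm (u t x - vb))\<^sup>2)"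
definition Fn :: "(real \<Rightarrow> 'a::euclidean_space \<Rightarrow> real) \<Rightarrow> (real \<Rightarrow> 'a \<Rightarrow> 'a) \<Rightarrow> real \<Rightarrow> real" where
  "Fn \<rho> f t = (LINT x|lborel. \<rho> t x * (norm (f t x))\<^sup>2)"
definition Pn :: "(real \<Rightarrow> 'a::euclidean_space \<Rightarrow> real) \<Rightarrow> (real \<Rightarrow> 'a \<Rightarrow> 'a) \<Rightarrow> (real \<Rightarrow> 'a \<Rightarrow> 'a) \<Rightarrow> 'a \<Rightarrow> real \<Rightarrow> real" where
  "Pn \<rho> u f vb t = (LINT x|lborel. \<rho> t x * ((u t x - vb) \<bullet> f t x))"

context trip begin

lemma Gb_cont: "t \<in> {a..T} \<Longrightarrow> continuous_on UNIV (\<lambda>x. Gb t x b)"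
proof -
  assume t: "t \<in> {a..T}"
  have c1: "continuous_on UNIV (\<lambda>x. rx t x b)" "continuous_on UNIV (\<lambda>x. ux t x b)"
    "continuous_on UNIV (\<lambda>x. \<rho> t x)" "continuous_on UNIV (\<lambda>x. u t x)"
    using rx_c[OF t] ux_c[OF t] rho_c[OF t] u_c[OF t] by auto
  show ?thesis unfolding Gb_def
    by (intro continuous_on_add continuous_on_mult continuous_on_inner continuous_on_diff continuous_on_const c1)
qed

lemma integrable_Bx: "continuous_on UNIV g \<Longrightarrow> (g::'a \<Rightarrow> real) integrable_on Bx R"
  unfolding Bx_def by (rule integrable_continuous[OF continuous_on_subset[OF _ subset_UNIV]])

lemma Gb_has0: "t \<in> {a..T} \<Longrightarrow> b \<in> Basis \<Longrightarrow> ((\<lambda>x. Gb t x b) has_integral 0) (Bx R)"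
  using integrable_integral[OF integrable_Bx[OF Gb_cont]] Gb_zero by metis

lemma cont_wf: "t \<in> {a..T} \<Longrightarrow> continuous_on UNIV (\<lambda>x. \<rho> t x * (w t x \<bullet> f t x))"
proof -
  assume t: "t \<in> {a..T}"
  have c1: "continuous_on UNIV (\<lambda>x. \<rho> t x)" "continuous_on UNIV (\<lambda>x. u t x)" "continuous_on UNIV (\<lambda>x. f t x)"
    using rho_c[OF t] u_c[OF t] f_c[OF t] by auto
  show ?thesis
    by (intro continuous_on_mult continuous_on_inner continuous_on_diff continuous_on_const c1)
qed

lemma cont_ww: "t \<in> {a..T} \<Longrightarrow> continuous_on UNIV (\<lambda>x. \<rho> t x * (w t x \<bullet> w t x))"
proof -
  assume t: "t \<in> {a..T}"
  have c1: "continuous_on UNIV (\<lambda>x. \<rho> t x)" "continuous_on UNIV (\<lambda>x. u t x)"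
    using rho_c[OF t] u_c[OF t] by auto
  show ?thesis
    by (intro continuous_on_mult continuous_on_inner continuous_on_diff continuous_on_const c1)
qed

lemma cont_ff: "t \<in> {a..T} \<Longrightarrow> continuous_on UNIV (\<lambda>x. \<rho> t x * (f t x \<bullet> f t x))"
proof -
  assume t: "t \<in> {a..T}"
  have c1: "continuous_on UNIV (\<lambda>x. \<rho> t x)" "continuous_on UNIV (\<lambda>x. f t x)"
    using rho_c[OF t] f_c[OF t] by auto
  show ?thesis
    by (intro continuous_on_mult continuous_on_inner continuous_on_diff continuous_on_const c1)
qed

lemma En_B: "t \<in> {a..T} \<Longrightarrow> En \<rho> u vb t = integral (Bx R) (\<lambda>x. \<rho> t x * (w t x \<bullet> w t x))"
  unfolding En_def power2_norm_eq_inner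
  by (rule lint_eq_integral_cont(2)[OF cont_ww]) (use supp in auto)

lemma En_int: "t \<in> {a..T} \<Longrightarrow> integrable lborel (\<lambda>x. \<rho> t x * (norm (u t x - vb))\<^sup>2)"
  unfolding power2_norm_eq_inner
  by (rule lint_eq_integral_cont(1)[OF cont_ww]) (use supp in auto)

lemma Fn_B: "t \<in> {a..T} \<Longrightarrow> Fn \<rho> f t = integral (Bx R) (\<lambda>x. \<rho> t x * (f t x \<bullet> f t x))"
  unfolding Fn_def power2_norm_eq_inner
  by (rule lint_eq_integral_cont(2)[OF cont_ff]) (use supp in auto)

lemma Fn_int: "t \<in> {a..T} \<Longrightarrow> integrable lborel (\<lambda>x. \<rho> t x * (norm (f t x))\<^sup>2)"
  unfolding power2_norm_eq_inner
  by (rule lint_eq_integral_cont(1)[OF cont_ff]) (use supp in auto)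

lemma Pn_B: "t \<in> {a..T} \<Longrightarrow> Pn \<rho> u f vb t = integral (Bx R) (\<lambda>x. \<rho> t x * (w t x \<bullet> f t x))"
  unfolding Pn_def
  by (rule lint_eq_integral_cont(2)[OF cont_wf]) (use supp in auto)

lemma Pn_int: "t \<in> {a..T} \<Longrightarrow> integrable lborel (\<lambda>x. \<rho> t x * (w t x \<bullet> f t x))"
  by (rule lint_eq_integral_cont(1)[OF cont_wf]) (use supp in auto)

lemma energy:
  assumes t: "t \<in> {a..T}"
  shows "\<exists>E'. (En \<rho> u vb has_field_derivative E') (at t within {a..T}) \<and> E' \<le> 2 * Pn \<rho> u f vb t"
proof -
  define E' where "E' = integral (Bx R) (\<lambda>x. rt t x * (w t x \<bullet> w t x) + 2 * \<rho> t x * (w t x \<bullet> ut t x))"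
  have D: "(En \<rho> u vb has_field_derivative E') (at t within {a..T})"
    unfolding E'_def
    by (rule has_field_derivative_transform_within[OF E_deriv[OF t] zero_less_one t]) (simp add: En_B)
  have hG: "((\<lambda>x. \<Sum>b\<in>Basis. Gb t x b) has_integral 0) (Bx R)"
    using has_integral_sum[where T=Basis and f="\<lambda>b x. Gb t x b" and i="\<lambda>b. 0" and S="Bx R"] Gb_has0[OF t] by simp
  obtain IQ where hQ: "((\<lambda>x. w t x \<bullet> Q1 \<Psi> \<rho> u t x) has_integral IQ) (Bx R)" and IQ: "IQ \<le> 0"
  proof -
    have iq: "integrable lborel (\<lambda>x. w t x \<bullet> Q1 \<Psi> \<rho> u t x)" and le: "(LINT x|lborel. w t x \<bullet> Q1 \<Psi> \<rho> u t x) \<le> 0"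
      using Q_neg[OF t] by auto
    have z: "w t x \<bullet> Q1 \<Psi> \<rho> u t x = 0" if "x \<notin> Bx R" for x
    proof -
      have "R + 1 < norm x" using that cball_sub_Bx[of x R] by force
      then have "\<rho> t x = 0" using supp[OF t] by simp
      then show ?thesis unfolding Q1_def by simp
    qed
    have "((\<lambda>x. w t x \<bullet> Q1 \<Psi> \<rho> u t x) has_integral (LINT x|lborel. w t x \<bullet> Q1 \<Psi> \<rho> u t x)) UNIV"
      by (rule has_integral_integral_lborel[OF iq])
    moreover have "(\<lambda>x. if x \<in> Bx R then w t x \<bullet> Q1 \<Psi> \<rho> u t x else 0) = (\<lambda>x. w t x \<bullet> Q1 \<Psi> \<rho> u t x)"
      using z by auto
    ultimately have "((\<lambda>x. w t x \<bullet> Q1 \<Psi> \<rho> u t x) has_integral (LINT x|lborel. w t x \<bullet> Q1 \<Psi> \<rho> u t x)) (Bx R)"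
      using has_integral_restrict_UNIV[of "Bx R" "\<lambda>x. w t x \<bullet> Q1 \<Psi> \<rho> u t x"] by simp
    then show ?thesis using that le by blast
  qed
  have hP: "((\<lambda>x. \<rho> t x * (w t x \<bullet> f t x)) has_integral Pn \<rho> u f vb t) (Bx R)"
    unfolding Pn_B[OF t] by (rule integrable_integral[OF integrable_Bx[OF cont_wf[OF t]]])
  have hall: "((\<lambda>x. - (\<Sum>b\<in>Basis. Gb t x b) + 2 * (w t x \<bullet> Q1 \<Psi> \<rho> u t x) + 2 * (\<rho> t x * (w t x \<bullet> f t x)))
      has_integral (- 0 + 2 * IQ + 2 * Pn \<rho> u f vb t)) (Bx R)"
    by (intro has_integral_add has_integral_neg hG has_integral_mult_right hQ hP)
  have "((\<lambda>x. rt t x * (w t x \<bullet> w t x) + 2 * \<rho> t x * (w t x \<bullet> ut t x))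
      has_integral (- 0 + 2 * IQ + 2 * Pn \<rho> u f vb t)) (Bx R)"
  proof (rule has_integral_eq[OF _ hall])
    fix x
    have "rt t x * (w t x \<bullet> w t x) + 2 * \<rho> t x * (w t x \<bullet> ut t x)
      = - (\<Sum>b\<in>Basis. Gb t x b) + 2 * (w t x \<bullet> Q1 \<Psi> \<rho> u t x) + 2 * \<rho> t x * (w t x \<bullet> f t x)"
      by (rule pointwise[OF t])
    then show "- (\<Sum>b\<in>Basis. Gb t x b) + 2 * (w t x \<bullet> Q1 \<Psi> \<rho> u t x) + 2 * (\<rho> t x * (w t x \<bullet> f t x)) =
      rt t x * (w t x \<bullet> w t x) + 2 * \<rho> t x * (w t x \<bullet> ut t x)"
      by (simp only: mult.assoc)
  qed
  then have "E' = 2 * IQ + 2 * Pn \<rho> u f vb t" unfolding E'_def by (simp add: integral_unique)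
  then show ?thesis using D IQ by auto
qed

end

lemma young_aux:
  fixes p q :: "'a::real_inner" and c r :: real
  assumes "c > 0" "r \<ge> 0"
  shows "2 * (r * (p \<bullet> q)) \<le> c * (r * (norm p)\<^sup>2) + r * (norm q)\<^sup>2 / c"
proof -
  have "0 \<le> (c *\<^sub>R p - q) \<bullet> (c *\<^sub>R p - q)" by simp
  also have "(c *\<^sub>R p - q) \<bullet> (c *\<^sub>R p - q) = c\<^sup>2 * (p \<bullet> p) - 2 * c * (p \<bullet> q) + q \<bullet> q"
    by (simp add: inner_diff_left inner_diff_right inner_commute[of q p] power2_eq_square algebra_simps)
  finally have "2 * c * (p \<bullet> q) \<le> c\<^sup>2 * (p \<bullet> p) + q \<bullet> q" by simp
  then have "2 * c * (p \<bullet> q) \<le> c\<^sup>2 * (norm p)\<^sup>2 + (norm q)\<^sup>2" by (simp add: power2_norm_eq_inner)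
  then have "2 * (p \<bullet> q) \<le> c * (norm p)\<^sup>2 + (norm q)\<^sup>2 / c"
    using assms(1) by (simp add: field_simps power2_eq_square)
  then have "r * (2 * (p \<bullet> q)) \<le> r * (c * (norm p)\<^sup>2 + (norm q)\<^sup>2 / c)"
    using assms(2) by (rule mult_left_mono)
  then show ?thesis by (simp add: algebra_simps)
qed

context trip begin

lemma En_cont: "continuous_on {a..T} (En \<rho> u vb)"
  unfolding continuous_on_eq_continuous_within
  using energy DERIV_continuous by blast

lemma Fn_cont: "continuous_on {a..T} (Fn \<rho> f)"
proof -
  have c: "continuous_on ({a..T} \<times> UNIV) (\<lambda>z. (\<lambda>(t,x). \<rho> t x) z * ((\<lambda>(t,x). f t x) z \<bullet> (\<lambda>(t,x). f t x) z))"
    by (intro continuous_on_mult continuous_on_inner rho_cont f_cont)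
  obtain lo hi :: 'a where B: "Bx R = cbox lo hi" unfolding Bx_def by blast
  have c2: "continuous_on ({a..T} \<times> UNIV) (\<lambda>(t,x). \<rho> t x * (f t x \<bullet> f t x))"
    using c by (simp add: case_prod_beta)
  have "continuous_on ({a..T} \<times> cbox lo hi) (\<lambda>(t,x). \<rho> t x * (f t x \<bullet> f t x))"
    by (rule continuous_on_subset[OF c2]) auto
  from integral_continuous_on_param[OF this]
  have "continuous_on {a..T} (\<lambda>t. integral (Bx R) (\<lambda>x. \<rho> t x * (f t x \<bullet> f t x)))" unfolding B .
  then show ?thesis by (rule continuous_on_eq) (simp add: Fn_B)
qed

lemma En_nonneg: "t \<in> {a..T} \<Longrightarrow> 0 \<le> En \<rho> u vb t"
  unfolding En_def using rho_nn by (intro Bochner_Integration.integral_nonneg) simp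

lemma Fn_nonneg: "t \<in> {a..T} \<Longrightarrow> 0 \<le> Fn \<rho> f t"
  unfolding Fn_def using rho_nn by (intro Bochner_Integration.integral_nonneg) simp

lemma Pn_bound:
  assumes t: "t \<in> {a..T}" and c: "c > 0"
  shows "2 * Pn \<rho> u f vb t \<le> c * En \<rho> u vb t + Fn \<rho> f t / c"
proof -
  have "2 * Pn \<rho> u f vb t = (LINT x|lborel. 2 * (\<rho> t x * (w t x \<bullet> f t x)))"
    unfolding Pn_def by simp
  also have "\<dots> \<le> (LINT x|lborel. c * (\<rho> t x * (norm (w t x))\<^sup>2) + \<rho> t x * (norm (f t x))\<^sup>2 / c)"
    using Pn_int[OF t] En_int[OF t] Fn_int[OF t] young_aux[OF c rho_nn[OF t]]
    by (intro integral_mono) auto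
  also have "\<dots> = c * En \<rho> u vb t + Fn \<rho> f t / c"
    unfolding En_def Fn_def using En_int[OF t] Fn_int[OF t] by simp
  finally show ?thesis .
qed

lemma feedback:
  assumes fb: "\<And>t x. t \<in> {a..T} \<Longrightarrow> f t x = - c *\<^sub>R (u t x - vb)" and t: "t \<in> {a..T}"
  shows "Pn \<rho> u f vb t = - c * En \<rho> u vb t" "Fn \<rho> f t = c\<^sup>2 * En \<rho> u vb t"
proof -
  have "Pn \<rho> u f vb t = (LINT x|lborel. - c * (\<rho> t x * (norm (u t x - vb))\<^sup>2))"
    unfolding Pn_def using fb[OF t] by (intro Bochner_Integration.integral_cong) (auto simp: power2_norm_eq_inner)
  then show "Pn \<rho> u f vb t = - c * En \<rho> u vb t" unfolding En_def by simp
  have "Fn \<rho> f t = (LINT x|lborel. c\<^sup>2 * (\<rho> t x * (norm (u t x - vb))\<^sup>2))"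
    unfolding Fn_def using fb[OF t] by (intro Bochner_Integration.integral_cong) (auto simp: power_mult_distrib)
  then show "Fn \<rho> f t = c\<^sup>2 * En \<rho> u vb t" unfolding En_def by simp
qed

lemma cost_eq:
  assumes a': "a \<le> a'"
  shows "cost lam vb T a' \<rho> u f = integral {a'..T} (\<lambda>t. En \<rho> u vb t + lam * Fn \<rho> f t)"
proof -
  have "cost lam vb T a' \<rho> u f = (LINT t:{a'..T}|lborel. En \<rho> u vb t + lam * Fn \<rho> f t)"
    unfolding cost_def
  proof (rule set_lebesgue_integral_cong)
    show "{a'..T} \<in> sets lborel" by simp
    show "\<forall>t. t \<in> {a'..T} \<longrightarrow> (LINT x|lborel. \<rho> t x * (norm (u t x - vb))\<^sup>2 + lam * \<rho> t x * (norm (f t x))\<^sup>2)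
       = En \<rho> u vb t + lam * Fn \<rho> f t"
    proof (intro allI impI)
      fix t assume "t \<in> {a'..T}"
      then have t: "t \<in> {a..T}" using a' by auto
      have "(LINT x|lborel. \<rho> t x * (norm (u t x - vb))\<^sup>2 + lam * \<rho> t x * (norm (f t x))\<^sup>2)
        = (LINT x|lborel. \<rho> t x * (norm (u t x - vb))\<^sup>2 + lam * (\<rho> t x * (norm (f t x))\<^sup>2))"
        by (simp add: mult.assoc)
      also have "\<dots> = En \<rho> u vb t + lam * Fn \<rho> f t"
        unfolding En_def Fn_def using En_int[OF t] Fn_int[OF t] by simp
      finally show "(LINT x|lborel. \<rho> t x * (norm (u t x - vb))\<^sup>2 + lam * \<rho> t x * (norm (f t x))\<^sup>2)
       = En \<rho> u vb t + lam * Fn \<rho> f t" .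
    qed
  qed
  also have "\<dots> = integral {a'..T} (\<lambda>t. En \<rho> u vb t + lam * Fn \<rho> f t)"
  proof (rule set_borel_integral_eq_integral(2))
    have "continuous_on {a'..T} (\<lambda>t. En \<rho> u vb t + lam * Fn \<rho> f t)"
      using a' by (intro continuous_on_add continuous_on_mult continuous_on_const
          continuous_on_subset[OF En_cont] continuous_on_subset[OF Fn_cont]) auto
    then show "set_integrable lborel {a'..T} (\<lambda>t. En \<rho> u vb t + lam * Fn \<rho> f t)"
      by (rule borel_integrable_atLeastAtMost')
  qed
  finally show ?thesis .
qed

end

lemma C1_cont:
  assumes "C1_on S g" shows "continuous_on S g"
proof -
  obtain g' where "\<forall>z\<in>S. (g has_derivative blinfun_apply (g' z)) (at z within S)"
    using assms unfolding C1_on_def by blast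
  then show ?thesis unfolding continuous_on_eq_continuous_within
    using has_derivative_continuous by blast
qed

lemma adm_trip:
  fixes \<Psi> :: "'a::euclidean_space \<Rightarrow> 'a \<Rightarrow> real" and vb :: 'a
  assumes adm: "admissible \<Psi> T a \<rho> u f"
    and Pc: "continuous_on UNIV (\<lambda>(x,y). \<Psi> x y)" and Ps: "\<And>x y. \<Psi> x y = \<Psi> y x" and Pn: "\<And>x y. 0 \<le> \<Psi> x y"
  obtains Gr Gu R where "trip \<Psi> T a \<rho> u f Gr Gu R"
proof -
  note A = adm[unfolded admissible_def]
  have aT: "a < T" by (rule A[THEN conjunct2, THEN conjunct1])
  have C1r: "C1_on ({a..T} \<times> UNIV) (\<lambda>(t,x). \<rho> t x)"
    by (rule A[THEN conjunct2, THEN conjunct2, THEN conjunct1])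
  have nn: "\<forall>t\<in>{a..T}. \<forall>x. 0 \<le> \<rho> t x"
    by (rule A[THEN conjunct2, THEN conjunct2, THEN conjunct2, THEN conjunct1])
  have C1u: "C1_on ({a..T} \<times> UNIV) (\<lambda>(t,x). u t x)"
    by (rule A[THEN conjunct2, THEN conjunct2, THEN conjunct2, THEN conjunct2, THEN conjunct1])
  have fc: "continuous_on ({a..T} \<times> UNIV) (\<lambda>(t,x). f t x)"
    by (rule A[THEN conjunct2, THEN conjunct2, THEN conjunct2, THEN conjunct2, THEN conjunct2, THEN conjunct1])
  have K: "\<exists>K. compact K \<and> (\<forall>t\<in>{a..T}. closure {x. \<rho> t x \<noteq> 0} \<subseteq> K)"
    by (rule A[THEN conjunct2, THEN conjunct2, THEN conjunct2, THEN conjunct2, THEN conjunct2, THEN conjunct2, THEN conjunct1])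
  have pde: "\<forall>t\<in>{a..T}. \<forall>x.
        dt a T (\<lambda>s. \<rho> s x) t + divx (\<lambda>y. \<rho> t y *\<^sub>R u t y) x = 0 \<and>
        dt a T (\<lambda>s. \<rho> s x *\<^sub>R u s x) t + div_tensor (\<rho> t) (u t) x
          = Q1 \<Psi> \<rho> u t x + \<rho> t x *\<^sub>R f t x"
    by (rule A[THEN conjunct2, THEN conjunct2, THEN conjunct2, THEN conjunct2, THEN conjunct2, THEN conjunct2, THEN conjunct2])
  obtain Gr :: "real \<times> 'a \<Rightarrow> (real \<times> 'a) \<Rightarrow>\<^sub>L real" where Gr: "continuous_on ({a..T} \<times> UNIV) Gr"
    "\<And>t x. t \<in> {a..T} \<Longrightarrow> ((\<lambda>s. \<rho> s x) has_vector_derivative blinfun_apply (Gr (t,x)) (1,0)) (at t within {a..T})"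
    "\<And>t x. t \<in> {a..T} \<Longrightarrow> ((\<lambda>y. \<rho> t y) has_derivative (\<lambda>h. blinfun_apply (Gr (t,x)) (0,h))) (at x)"
    apply (rule C1_partials[OF C1r]) by (rule that)
  obtain Gu :: "real \<times> 'a \<Rightarrow> (real \<times> 'a) \<Rightarrow>\<^sub>L 'a" where Gu: "continuous_on ({a..T} \<times> UNIV) Gu"
    "\<And>t x. t \<in> {a..T} \<Longrightarrow> ((\<lambda>s. u s x) has_vector_derivative blinfun_apply (Gu (t,x)) (1,0)) (at t within {a..T})"
    "\<And>t x. t \<in> {a..T} \<Longrightarrow> ((\<lambda>y. u t y) has_derivative (\<lambda>h. blinfun_apply (Gu (t,x)) (0,h))) (at x)"
    apply (rule C1_partials[OF C1u]) by (rule that)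
  obtain K where Kc: "compact K" and Ks: "\<And>t. t\<in>{a..T} \<Longrightarrow> closure {x. \<rho> t x \<noteq> 0} \<subseteq> K"
    using K by blast
  obtain R0 where R0: "\<forall>x\<in>K. norm x \<le> R0" using compact_imp_bounded[OF Kc] unfolding bounded_iff by blast
  define R where "R = max R0 0"
  have supp: "\<rho> t x = 0" if t: "t \<in> {a..T}" and x: "R < norm x" for t x
  proof (rule ccontr)
    assume "\<rho> t x \<noteq> 0"
    then have "x \<in> {x. \<rho> t x \<noteq> 0}" by simp
    then have "x \<in> closure {x. \<rho> t x \<noteq> 0}" by (rule subsetD[OF closure_subset])
    then have "x \<in> K" by (rule subsetD[OF Ks[OF t]])
    then have "norm x \<le> R0" using R0 by blast
    moreover have "R0 \<le> R" unfolding R_def by simp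
    ultimately show False using x by linarith
  qed
  have "trip \<Psi> T a \<rho> u f Gr Gu R"
  proof (rule trip.intro)
    show "a < T" by (rule aT)
    show "\<And>t x. t \<in> {a..T} \<Longrightarrow> 0 \<le> \<rho> t x" using nn by blast
    show "continuous_on ({a..T} \<times> UNIV) (\<lambda>(t, x). f t x)" by (rule fc)
    show "continuous_on ({a..T} \<times> UNIV) (\<lambda>(t, x). \<rho> t x)" by (rule C1_cont[OF C1r])
    show "continuous_on ({a..T} \<times> UNIV) (\<lambda>(t, x). u t x)" by (rule C1_cont[OF C1u])
    show "\<And>t x. t \<in> {a..T} \<Longrightarrow> dt a T (\<lambda>s. \<rho> s x) t + divx (\<lambda>y. \<rho> t y *\<^sub>R u t y) x = 0"
      by (rule pde[rule_format, THEN conjunct1])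
    show "\<And>t x. t \<in> {a..T} \<Longrightarrow> dt a T (\<lambda>s. \<rho> s x *\<^sub>R u s x) t + div_tensor (\<rho> t) (u t) x = Q1 \<Psi> \<rho> u t x + \<rho> t x *\<^sub>R f t x"
      by (rule pde[rule_format, THEN conjunct2])
    show "continuous_on UNIV (\<lambda>(x, y). \<Psi> x y)" by (rule Pc)
    show "\<And>x y. \<Psi> x y = \<Psi> y x" by (rule Ps)
    show "\<And>x y. 0 \<le> \<Psi> x y" by (rule Pn)
    show "continuous_on ({a..T} \<times> UNIV) Gr" by (rule Gr(1))
    show "continuous_on ({a..T} \<times> UNIV) Gu" by (rule Gu(1))
    show "\<And>t x. t \<in> {a..T} \<Longrightarrow> ((\<lambda>s. \<rho> s x) has_vector_derivative blinfun_apply (Gr (t,x)) (1,0)) (at t within {a..T})"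
      by (rule Gr(2))
    show "\<And>t x. t \<in> {a..T} \<Longrightarrow> ((\<lambda>y. \<rho> t y) has_derivative (\<lambda>h. blinfun_apply (Gr (t,x)) (0,h))) (at x)"
      by (rule Gr(3))
    show "\<And>t x. t \<in> {a..T} \<Longrightarrow> ((\<lambda>s. u s x) has_vector_derivative blinfun_apply (Gu (t,x)) (1,0)) (at t within {a..T})"
      by (rule Gu(2))
    show "\<And>t x. t \<in> {a..T} \<Longrightarrow> ((\<lambda>y. u t y) has_derivative (\<lambda>h. blinfun_apply (Gu (t,x)) (0,h))) (at x)"
      by (rule Gu(3))
    show "0 \<le> R" unfolding R_def by simp
    show "\<And>t x. t \<in> {a..T} \<Longrightarrow> R < norm x \<Longrightarrow> \<rho> t x = 0" by (rule supp)
  qed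
  then show ?thesis by (rule that)
qed



lemma C_ge2: "lam > 0 \<Longrightarrow> 2 \<le> C_lambda lam"
proof -
  assume l: "lam > 0"
  show ?thesis
  proof (cases "lam \<le> 1")
    case True
    then have "sqrt lam \<le> 1" by simp
    moreover have "sqrt lam > 0" using l by simp
    ultimately have "1 \<le> 1 / sqrt lam" by (simp add: field_simps)
    then show ?thesis using True unfolding C_lambda_def by simp
  next
    case False
    then have "1 < sqrt lam" by simp
    then show ?thesis using False unfolding C_lambda_def by simp
  qed
qed

theorem lemma4p3:
  fixes \<Psi> :: "'a::euclidean_space \<Rightarrow> 'a \<Rightarrow> real"
    and lam T :: real and vbar :: 'a
    and \<rho> :: "real \<Rightarrow> 'a \<Rightarrow> real" and u f :: "real \<Rightarrow> 'a \<Rightarrow> 'a"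
  assumes "T > 0" and "lam > 0"
    and "\<exists>L. L-lipschitz_on UNIV (\<lambda>(x,y). \<Psi> x y)"
    and "\<And>x y. \<Psi> x y = \<Psi> y x"
    and "\<And>x y. 0 \<le> \<Psi> x y"
    and "\<exists>M. \<forall>x y. \<Psi> x y \<le> M"
    and "optimal \<Psi> lam vbar T \<rho> u f"
    and "\<forall>a\<in>{0..<T}. \<exists>\<rho>' u' f'. admissible \<Psi> T a \<rho>' u' f' \<and> \<rho>' a = \<rho> a \<and> u' a = u a \<and>
           (\<forall>t\<in>{a..T}. \<forall>x. f' t x = - (1 / sqrt lam) *\<^sub>R (u' t x - vbar))"
    and "0 \<le> t1" and "t1 \<le> t2" and "t2 \<le> T"
  shows "(LINT x|lborel. \<rho> t2 x * (norm (u t2 x - vbar))\<^sup>2)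
           \<le> C_lambda lam * (LINT x|lborel. \<rho> t1 x * (norm (u t1 x - vbar))\<^sup>2)"
proof -
  note lam = assms(2)
  obtain L where "L-lipschitz_on UNIV (\<lambda>(x,y). \<Psi> x y)" using assms(3) by blast
  then have Pc: "continuous_on UNIV (\<lambda>(x,y). \<Psi> x y)" by (rule lipschitz_on_continuous_on)
  have adm0: "admissible \<Psi> T 0 \<rho> u f" using assms(7) unfolding optimal_def by blast
  have optc: "\<And>a \<rho>' u' f'. a \<in> {0..<T} \<Longrightarrow> admissible \<Psi> T a \<rho>' u' f' \<Longrightarrow> \<rho>' a = \<rho> a \<Longrightarrow> u' a = u a \<Longrightarrow>
        cost lam vbar T a \<rho> u f \<le> cost lam vbar T a \<rho>' u' f'"
    using assms(7) unfolding optimal_def by blast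
  obtain Gr Gu R where "trip \<Psi> T 0 \<rho> u f Gr Gu R"
    by (rule adm_trip[OF adm0 Pc assms(4) assms(5)])
  then interpret O: trip \<Psi> T 0 \<rho> u f vbar Gr Gu R .
  define E where "E = En \<rho> u vbar"
  define F where "F = Fn \<rho> f"
  have t1T: "t1 \<in> {0..T}" and t2T: "t2 \<in> {0..T}" using assms(9-11) by auto
  have E1: "0 \<le> E t1" unfolding E_def by (rule O.En_nonneg[OF t1T])
  have main: "E t2 \<le> 2 * E t1"
  proof (cases "t1 = t2")
    case True then show ?thesis using E1 by simp
  next
    case False
    then have t12: "t1 < t2" using assms(10) by simp
    then have t1a: "t1 \<in> {0..<T}" using assms(9,11) by auto
    obtain \<rho>' u' f' where adm': "admissible \<Psi> T t1 \<rho>' u' f'" and r1: "\<rho>' t1 = \<rho> t1" and u1: "u' t1 = u t1"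
      and fb: "\<forall>t\<in>{t1..T}. \<forall>x. f' t x = - (1 / sqrt lam) *\<^sub>R (u' t x - vbar)"
      using assms(8) t1a by blast
    obtain Gr' Gu' R' where "trip \<Psi> T t1 \<rho>' u' f' Gr' Gu' R'"
      by (rule adm_trip[OF adm' Pc assms(4) assms(5)])
    then interpret P: trip \<Psi> T t1 \<rho>' u' f' vbar Gr' Gu' R' .
    define c where "c = 1 / sqrt lam"
    have sl: "sqrt lam > 0" using lam by simp
    have c0: "c > 0" unfolding c_def using sl by simp
    have ll: "sqrt lam * sqrt lam = lam" using lam by simp
    have "c * lam = (1 / sqrt lam) * (sqrt lam * sqrt lam)" unfolding c_def ll ..
    also have "\<dots> = sqrt lam"
    proof -
      have gen: "\<And>x::real. x \<noteq> 0 \<Longrightarrow> 1 / x * (x * x) = x" by simp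
      show ?thesis using gen[of "sqrt lam"] sl by linarith
    qed
    finally have cl: "c * lam = sqrt lam" .
    have c2l: "lam * c\<^sup>2 = 1" unfolding c_def using lam by (simp add: power_divide)
    have ic: "1 / c = sqrt lam" unfolding c_def by simp
    define E' where "E' = En \<rho>' u' vbar"
    define F' where "F' = Fn \<rho>' f'"
    have E'1: "E' t1 = E t1" unfolding E'_def E_def En_def using r1 u1 by simp
    have fb': "\<And>t x. t \<in> {t1..T} \<Longrightarrow> f' t x = - c *\<^sub>R (u' t x - vbar)"
      using fb unfolding c_def by blast
    have E'c: "continuous_on {t1..T} E'" unfolding E'_def by (rule P.En_cont)
    obtain D' where D': "\<And>t. t \<in> {t1..T} \<Longrightarrow> (E' has_field_derivative D' t) (at t within {t1..T}) \<and> D' t \<le> 2 * Pn \<rho>' u' f' vbar t"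
      using P.energy unfolding E'_def by metis
    define H where "H t = E' t + 2 * c * integral {t1..t} E'" for t
    have "H T \<le> H t1"
    proof (rule deriv_nonpos_mono[of t1 T H "\<lambda>t. D' t + 2 * c * E' t"])
      show "t1 \<le> T" using t1a by simp
      fix t assume t: "t \<in> {t1..T}"
      show "(H has_real_derivative D' t + 2 * c * E' t) (at t within {t1..T})"
        unfolding H_def
        by (intro DERIV_add DERIV_cmult conjunct1[OF D'[OF t]] integral_has_real_derivative[OF E'c t])
      have "D' t \<le> 2 * Pn \<rho>' u' f' vbar t" using D'[OF t] by blast
      also have "\<dots> = - 2 * c * E' t" unfolding E'_def using P.feedback(1)[OF fb' t] by simp
      finally show "D' t + 2 * c * E' t \<le> 0" by simp
    qed
    moreover have "0 \<le> E' T" unfolding E'_def by (rule P.En_nonneg) (use t1a in auto)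
    ultimately have I': "2 * c * integral {t1..T} E' \<le> E t1" unfolding H_def using E'1 by simp
    have cost': "cost lam vbar T t1 \<rho>' u' f' = 2 * integral {t1..T} E'"
    proof -
      have "cost lam vbar T t1 \<rho>' u' f' = integral {t1..T} (\<lambda>t. E' t + lam * F' t)"
        unfolding E'_def F'_def by (rule P.cost_eq) simp
      also have "\<dots> = integral {t1..T} (\<lambda>t. 2 * E' t)"
      proof (rule integral_cong)
        fix t assume t: "t \<in> {t1..T}"
        show "E' t + lam * F' t = 2 * E' t"
          unfolding F'_def E'_def using P.feedback(2)[OF fb' t] c2l by (simp add: algebra_simps)
      qed
      finally show ?thesis by simp
    qed
    have costO: "cost lam vbar T t1 \<rho> u f \<le> cost lam vbar T t1 \<rho>' u' f'"
      by (rule optc[OF t1a adm' r1 u1])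
    have costE: "cost lam vbar T t1 \<rho> u f = integral {t1..T} (\<lambda>t. E t + lam * F t)"
      unfolding E_def F_def by (rule O.cost_eq) (use t1a in auto)
    have EFc: "continuous_on {t1..T} (\<lambda>t. E t + lam * F t)"
      unfolding E_def F_def using t1a
      by (intro continuous_on_add continuous_on_mult continuous_on_const
          continuous_on_subset[OF O.En_cont] continuous_on_subset[OF O.Fn_cont]) auto
    have EFc2: "continuous_on {t1..t2} (\<lambda>t. E t + lam * F t)"
      by (rule continuous_on_subset[OF EFc]) (use assms(11) in auto)
    obtain D where D: "\<And>t. t \<in> {0..T} \<Longrightarrow> (E has_field_derivative D t) (at t within {0..T}) \<and> D t \<le> 2 * Pn \<rho> u f vbar t"
      using O.energy unfolding E_def by metis
    define G where "G t = E t - c * integral {t1..t} (\<lambda>t. E t + lam * F t)" for t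
    have "G t2 \<le> G t1"
    proof (rule deriv_nonpos_mono[of t1 t2 G "\<lambda>t. D t - c * (E t + lam * F t)"])
      show "t1 \<le> t2" by (rule assms(10))
      fix t assume t: "t \<in> {t1..t2}"
      then have t0: "t \<in> {0..T}" using assms(9,11) by auto
      have dE: "(E has_field_derivative D t) (at t within {t1..t2})"
        by (rule DERIV_subset[OF conjunct1[OF D[OF t0]]]) (use assms(9,11) in auto)
      show "(G has_real_derivative D t - c * (E t + lam * F t)) (at t within {t1..t2})"
        unfolding G_def
        by (intro DERIV_diff DERIV_cmult dE integral_has_real_derivative[OF EFc2 t])
      have "D t \<le> 2 * Pn \<rho> u f vbar t" using D[OF t0] by blast
      also have "\<dots> \<le> c * E t + F t / c" unfolding E_def F_def by (rule O.Pn_bound[OF t0 c0])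
      also have "F t / c = c * lam * F t" using ic cl by (simp add: divide_inverse)
      finally show "D t - c * (E t + lam * F t) \<le> 0" by (simp add: algebra_simps)
    qed
    then have "E t2 \<le> E t1 + c * integral {t1..t2} (\<lambda>t. E t + lam * F t)" unfolding G_def by simp
    also have "integral {t1..t2} (\<lambda>t. E t + lam * F t) \<le> integral {t1..T} (\<lambda>t. E t + lam * F t)"
    proof (rule integral_subset_le)
      show "{t1..t2} \<subseteq> {t1..T}" using assms(11) by auto
      show "(\<lambda>t. E t + lam * F t) integrable_on {t1..t2}" by (rule integrable_continuous_interval[OF EFc2])
      show "(\<lambda>t. E t + lam * F t) integrable_on {t1..T}" by (rule integrable_continuous_interval[OF EFc])
      show "\<forall>t\<in>{t1..T}. 0 \<le> E t + lam * F t"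
      proof
        fix t assume "t \<in> {t1..T}"
        then have t0: "t \<in> {0..T}" using assms(9) by auto
        show "0 \<le> E t + lam * F t" unfolding E_def F_def
          using O.En_nonneg[OF t0] O.Fn_nonneg[OF t0] lam by simp
      qed
    qed
    then have "E t1 + c * integral {t1..t2} (\<lambda>t. E t + lam * F t) \<le> E t1 + c * cost lam vbar T t1 \<rho> u f"
      unfolding costE using c0 by (simp add: mult_left_mono)
    also have "\<dots> \<le> E t1 + c * cost lam vbar T t1 \<rho>' u' f'" using costO c0 by (simp add: mult_left_mono)
    also have "\<dots> \<le> 2 * E t1" unfolding cost' using I' by simp
    finally show ?thesis .
  qed
  have "E t2 \<le> C_lambda lam * E t1"
    using main mult_right_mono[OF C_ge2[OF lam] E1] by simp
  then show ?thesis unfolding E_def En_def .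
qed


end
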